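(* $\mathfrak{s}(2^\omega)$ is uncountable.
   Context: For infinite sets $U, A$, say $U$ splits $A$ if both $A\cap U$ and $A\setminus U$ are infinite. For a topological space $X$, $\mathfrak{s}(X)$ is the smallest cardinality of a family $\mathcal{U}$ of open subsets of $X$ such that every infinite $A\subseteq X$ is split by some $U\in\mathcal{U}$. $2^\omega$ is the Cantor space. *)

theory Defs
  imports "HOL-Analysis.Analysis"
begin

definition splits :: "'a set \<Rightarrow> 'a set \<Rightarrow> bool" where
  "splits U A \<longleftrightarrow> infinite (A \<inter> U) \<and> infinite (A - U)"

definition splitting_family :: "'a topology \<Rightarrow> 'a set set \<Rightarrow> bool" where
  "splitting_family X \<U> \<longleftrightarrow>
     (\<forall>U\<in>\<U>. openin X U) \<and>
     (\<forall>A. A \<subseteq> topspace X \<and> infinite A \<longrightarrow> (\<exists>U\<in>\<U>. splits U A))"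

definition cantor_space :: "(nat \<Rightarrow> bool) topology" where
  "cantor_space = product_topology (\<lambda>_. discrete_topology (UNIV :: bool set)) UNIV"

end

theory Submission
  imports Defs
begin

lemma top_cantor[simp]: "topspace cantor_space = UNIV"
  unfolding cantor_space_def by (simp add: PiE_UNIV_domain)

lemma open_coord: "openin cantor_space {x. x n = b}"
proof -
  have "continuous_map cantor_space (discrete_topology (UNIV::bool set)) (\<lambda>x. x n)"
    unfolding cantor_space_def by (rule continuous_map_product_projection) simp
  from openin_continuous_map_preimage[OF this, of "{b}"]
  show ?thesis by simp
qed

lemma open_cyl: "openin cantor_space {x. \<forall>m\<le>n. x m = z m}"
proof (induction n)
  case 0
  then show ?case using open_coord[of 0 "z 0"] by simp
next
  case (Suc n)
  have "{x. \<forall>m\<le>Suc n. x m = z m} = {x. \<forall>m\<le>n. x m = z m} \<inter> {x. x (Suc n) = z (Suc n)}"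
    using le_Suc_eq by auto
  then show ?case using openin_Int[OF Suc open_coord] by simp
qed

lemma no_isolated:
  assumes "openin cantor_space V" "a \<in> V"
  shows "\<exists>n. a(n := \<not> a n) \<in> V"
proof -
  obtain U where U: "finite {i. U i \<noteq> UNIV}" "a \<in> Pi\<^sub>E UNIV U" "Pi\<^sub>E UNIV U \<subseteq> V"
    using assms unfolding cantor_space_def openin_product_topology_alt by fastforce
  obtain n where n: "n \<notin> {i. U i \<noteq> UNIV}" using U(1) ex_new_if_finite infinite_UNIV_nat by blast
  have "a(n := \<not> a n) \<in> Pi\<^sub>E UNIV U" using U(2) n by (auto simp: PiE_iff)
  then show ?thesis using U(3) by blast
qed

lemma step:
  assumes "openin cantor_space C" "C \<noteq> {}" "openin cantor_space U"
  shows "\<exists>C'. openin cantor_space C' \<and> C' \<noteq> {} \<and> C' \<subseteq> C \<and> (C' \<subseteq> U \<or> C' \<inter> U = {}) \<and> C - C' \<noteq> {}"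
proof -
  obtain V where V: "openin cantor_space V" "V \<noteq> {}" "V \<subseteq> C" "V \<subseteq> U \<or> V \<inter> U = {}"
  proof (cases "C \<inter> U = {}")
    case True then show ?thesis using that assms by blast
  next
    case False then show ?thesis using that[of "C \<inter> U"] assms by blast
  qed
  then obtain a where a: "a \<in> V" by blast
  then obtain n where n: "a(n := \<not> a n) \<in> V" using no_isolated V(1) by blast
  define W where "W = V \<inter> {x. x n = a n}"
  have "openin cantor_space W" unfolding W_def using V(1) open_coord by blast
  moreover have "W \<noteq> {}" using a W_def by blast
  moreover have "a(n := \<not> a n) \<in> C - W" using n V(3) W_def by auto
  moreover have "W \<subseteq> C" "W \<subseteq> U \<or> W \<inter> U = {}" using V unfolding W_def by auto
  ultimately show ?thesis by (intro exI[of _ W]) blast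
qed


lemma infinite_split_nat:
  fixes D :: "nat set"
  assumes "infinite D"
  shows "\<exists>S\<subseteq>D. infinite S \<and> infinite (D - S)"
proof -
  define e where "e = enumerate D"
  have sm: "strict_mono e" unfolding e_def using assms by (rule strict_mono_enumerate)
  have rg: "range e = D" unfolding e_def using assms by (rule range_enumerate)
  have inj: "inj e" using sm by (rule strict_mono_imp_inj_on)
  have ie: "infinite {k::nat. even k}"
    by (metis (mono_tags) dvd_triv_left infinite_nat_iff_unbounded_le mem_Collect_eq Suc_1 le_add2 mult_2)
  have io: "infinite {k::nat. odd k}"
  proof -
    have "Suc ` {k::nat. even k} \<subseteq> {k. odd k}" by auto
    moreover have "infinite (Suc ` {k::nat. even k})" using ie finite_imageD inj_Suc by (metis inj_on_subset subset_UNIV)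
    ultimately show ?thesis using finite_subset by blast
  qed
  have "D - e ` {k. even k} = e ` {k. odd k}"
    using rg inj by (auto simp: inj_eq)
  moreover have "infinite (e ` {k. even k})" "infinite (e ` {k. odd k})"
    using ie io inj_on_subset[OF inj subset_UNIV] by (auto dest!: finite_imageD)
  ultimately show ?thesis using rg by (intro exI[of _ "e ` {k. even k}"]) auto
qed

lemma part1: "splitting_family cantor_space {U. openin cantor_space U}"
  unfolding splitting_family_def
proof (intro conjI ballI allI impI)
  fix A :: "(nat \<Rightarrow> bool) set"
  assume "A \<subseteq> topspace cantor_space \<and> infinite A"
  then have A: "infinite A" by blast
  show "\<exists>U\<in>{U. openin cantor_space U}. splits U A"
  proof (cases "\<exists>n. infinite {x\<in>A. x n} \<and> infinite {x\<in>A. \<not> x n}")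
    case True
    then obtain n where n: "infinite {x\<in>A. x n}" "infinite {x\<in>A. \<not> x n}" by blast
    have "A \<inter> {x. x n = True} = {x\<in>A. x n}" "A - {x. x n = True} = {x\<in>A. \<not> x n}" by auto
    then have "splits {x. x n = True} A" using n unfolding splits_def by simp
    then show ?thesis using open_coord by blast
  next
    case False
    define y where "y n = infinite {x\<in>A. x n}" for n
    have fin: "finite {x\<in>A. x n \<noteq> y n}" for n
    proof (cases "infinite {x\<in>A. x n}")
      case True
      then have "{x\<in>A. x n \<noteq> y n} = {x\<in>A. \<not> x n}" by (auto simp: y_def)
      then show ?thesis using True False by auto
    next
      case False
      then have "{x\<in>A. x n \<noteq> y n} = {x\<in>A. x n}" by (auto simp: y_def)
      then show ?thesis using False by auto
    qed
    define d where "d x = (LEAST n. x n \<noteq> y n)" for x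
    have dex: "x \<noteq> y \<Longrightarrow> \<exists>n. x n \<noteq> y n" for x by auto
    have d1: "x (d x) \<noteq> y (d x)" if "x \<noteq> y" for x unfolding d_def using LeastI_ex[OF dex[OF that]] .
    have d2: "x m = y m" if "m < d x" for x m using that unfolding d_def using not_less_Least[of m "\<lambda>n. x n \<noteq> y n"] by simp
    define A' where "A' = A - {y}"
    have A'inf: "infinite A'" unfolding A'_def using A by simp
    define D where "D = d ` A'"
    have fib: "{x\<in>A'. d x = n} \<subseteq> {x\<in>A. x n \<noteq> y n}" for n
      using d1 unfolding A'_def by auto
    have "infinite D"
    proof
      assume "finite D"
      have "A' \<subseteq> (\<Union>n\<in>D. {x\<in>A. x n \<noteq> y n})" using fib unfolding D_def by blast
      then show False using A'inf fin \<open>finite D\<close> by (meson finite_UN_I finite_subset)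
    qed
    then obtain S where S: "S \<subseteq> D" "infinite S" "infinite (D - S)" using infinite_split_nat by blast
    define U where "U = (\<Union>n\<in>S. {x. \<forall>m\<le>n. x m = (y(n := \<not> y n)) m})"
    have Uo: "openin cantor_space U" unfolding U_def using open_cyl by blast
    have memU: "x \<in> U \<longleftrightarrow> d x \<in> S" if "x \<noteq> y" for x
    proof
      assume "x \<in> U"
      then obtain n where n: "n \<in> S" "\<forall>m\<le>n. x m = (y(n := \<not> y n)) m" unfolding U_def by blast
      have "d x = n" unfolding d_def
      proof (rule Least_equality)
        show "x n \<noteq> y n" using n(2) by auto
        show "\<And>m. x m \<noteq> y m \<Longrightarrow> n \<le> m"
          using n(2) by (metis fun_upd_other le_cases nat_less_le)
      qed
      then show "d x \<in> S" using n by simp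
    next
      assume "d x \<in> S"
      moreover have "\<forall>m\<le>d x. x m = (y(d x := \<not> y (d x))) m"
        using d1[OF that] d2 by (auto simp: le_less)
      ultimately show "x \<in> U" unfolding U_def by blast
    qed
    have "d ` {x\<in>A'. d x \<in> S} = S" using S(1) unfolding D_def by auto
    moreover have "{x\<in>A'. d x \<in> S} \<subseteq> A \<inter> U" using memU unfolding A'_def by auto
    ultimately have i1: "infinite (A \<inter> U)" using S(2) by (metis finite_imageI finite_subset)
    have "d ` {x\<in>A'. d x \<in> D - S} = D - S" unfolding D_def by auto
    moreover have "{x\<in>A'. d x \<in> D - S} \<subseteq> A - U" using memU unfolding A'_def by auto
    ultimately have i2: "infinite (A - U)" using S(3) by (metis finite_imageI finite_subset)
    show ?thesis using Uo i1 i2 unfolding splits_def by blast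
  qed
qed simp


lemma part2:
  assumes "countable \<U>" "splitting_family cantor_space \<U>"
  shows False
proof -
  have op: "\<forall>U\<in>\<U>. openin cantor_space U"
    and sp: "\<And>A. infinite A \<Longrightarrow> \<exists>U\<in>\<U>. splits U A"
    using assms(2) unfolding splitting_family_def by auto
  have "inj (\<lambda>n::nat. \<lambda>m::nat. m = n)" by (auto simp: inj_def fun_eq_iff)
  then have "infinite (range (\<lambda>n::nat. \<lambda>m::nat. m = n))" by (rule range_inj_infinite)
  then have "infinite (UNIV :: (nat \<Rightarrow> bool) set)" by (rule infinite_super[OF subset_UNIV])
  then have "\<U> \<noteq> {}" using sp[of UNIV] by auto
  define u where "u = from_nat_into \<U>"
  have u: "\<U> = range u" using range_from_nat_into[OF \<open>\<U> \<noteq> {}\<close> assms(1)] by (simp add: u_def)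
  have uo: "openin cantor_space (u k)" for k using op u by blast
  define P where "P C U C' \<longleftrightarrow> openin cantor_space C' \<and> C' \<noteq> {} \<and> C' \<subseteq> C \<and> (C' \<subseteq> U \<or> C' \<inter> U = {}) \<and> C - C' \<noteq> {}"
    for C U C' :: "(nat \<Rightarrow> bool) set"
  define f where "f C U = (SOME C'. P C U C')" for C U
  have f: "P C U (f C U)" if "openin cantor_space C" "C \<noteq> {}" "openin cantor_space U" for C U
    unfolding f_def by (rule someI_ex) (use step[OF that] in \<open>simp add: P_def\<close>)
  define C where "C = rec_nat UNIV (\<lambda>k c. f c (u k))"
  have C0: "C 0 = UNIV" and CS: "C (Suc k) = f (C k) (u k)" for k unfolding C_def by simp_all
  have Cgood: "openin cantor_space (C k) \<and> C k \<noteq> {}" for k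
  proof (induction k)
    case 0 then show ?case using C0 openin_topspace[of cantor_space] by simp
  next
    case (Suc k)
    then have "P (C k) (u k) (C (Suc k))" using f[OF _ _ uo] CS by simp
    then show ?case unfolding P_def by simp
  qed
  have Cf: "C (Suc k) \<subseteq> C k \<and> (C (Suc k) \<subseteq> u k \<or> C (Suc k) \<inter> u k = {}) \<and> C k - C (Suc k) \<noteq> {}" for k
  proof -
    have "P (C k) (u k) (C (Suc k))" using f[OF _ _ uo] CS Cgood by simp
    then show ?thesis unfolding P_def by simp
  qed
  have Cmono: "C j \<subseteq> C k" if "k \<le> j" for j k
    using that
  proof (induction j)
    case 0 then show ?case by simp
  next
    case (Suc j) then show ?case using Cf[of j] by (auto simp: le_Suc_eq)
  qed
  define x where "x k = (SOME p. p \<in> C k - C (Suc k))" for k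
  have x: "x k \<in> C k - C (Suc k)" for k unfolding x_def using Cf[of k] some_in_eq by blast
  have "inj x"
  proof (rule injI)
    fix i j assume eq: "x i = x j"
    show "i = j"
    proof (rule ccontr)
      assume "i \<noteq> j"
      then consider "i < j" | "j < i" by linarith
      then show False
      proof cases
        case 1 then show False using x[of i] x[of j] Cmono[of "Suc i" j] eq by auto
      next
        case 2 then show False using x[of i] x[of j] Cmono[of "Suc j" i] eq by auto
      qed
    qed
  qed
  then have Ainf: "infinite (range x)" using finite_imageD infinite_UNIV_nat by blast
  then obtain k where k: "splits (u k) (range x)" using sp u by blast
  have late: "x j \<in> C (Suc k)" if "j > k" for j using x[of j] Cmono[of "Suc k" j] that by auto
  have finpre: "finite (x ` {..k})" by simp
  show False
  proof (cases "C (Suc k) \<subseteq> u k")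
    case True
    have "range x - u k \<subseteq> x ` {..k}"
      using late True by (auto simp: not_le) (metis atMost_iff image_eqI not_less subsetD)
    then show False using k finpre unfolding splits_def by (meson finite_subset)
  next
    case False
    then have dis: "C (Suc k) \<inter> u k = {}" using Cf by blast
    have "range x \<inter> u k \<subseteq> x ` {..k}"
    proof
      fix p assume "p \<in> range x \<inter> u k"
      then obtain j where "p = x j" "p \<in> u k" by blast
      then have "j \<le> k" using late dis by (metis disjoint_iff not_le)
      then show "p \<in> x ` {..k}" using \<open>p = x j\<close> by blast
    qed
    then show False using k finpre unfolding splits_def by (meson finite_subset)
  qed
qed

theorem lemma2p4:
  shows "(\<exists>\<U>. splitting_family cantor_space \<U>) \<and>
         \<not> (\<exists>\<U>. countable \<U> \<and> splitting_family cantor_space \<U>)"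
  using part1 part2 by blast

end
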